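(* Let $G=(V,E)$ be a fixed finite simple graph, $\Gamma$ a nonempty family of walks on $G$, and $1<p<\infty$. Define $F(\sigma):=\mathrm{Mod}_p(\Gamma;\sigma)$ for weights $\sigma:E\to(0,\infty)$, and let $\rho^*_\sigma$ be the unique extremal density for $\mathrm{Mod}_p(\Gamma;\sigma)$. Then for every $\sigma$ and every direction $\eta:E\to\mathbb{R}$, $$\lim_{h\to0^+}\frac{F(\sigma+h\eta)-F(\sigma)}{h}=\sum_{e\in E}\eta(e)\rho^*_\sigma(e)^p;$$ in particular $\dfrac{\partial F(\sigma)}{\partial\sigma(e)}=\rho^*_\sigma(e)^p$ for every $e\in E$.
   Context: $G=(V,E)$ is a finite simple graph (directed or undirected). A walk is a string of edges $e_1\dots e_r$, $r\ge1$, $e_i=(v_i,v_{i+1})\in E$, with $\rho$-length $\ell_\rho(\gamma)=\sum_i\rho(e_i)$ for $\rho:E\to\mathbb{R}$. $A(\Gamma)=\{\rho:E\to\mathbb{R}:\rho\ge0,\ \ell_\rho(\gamma)\ge1\ \forall\gamma\in\Gamma\}$. For weights $\sigma:E\to(0,\infty)$, $\mathcal{E}_p(\rho;\sigma)=\sum_e\sigma(e)|\rho(e)|^p$ and $\mathrm{Mod}_p(\Gamma;\sigma)=\inf_{\rho\in A(\Gamma)}\mathcal{E}_p(\rho;\sigma)$; the extremal density is the unique minimizer in $A(\Gamma)$ (for $1<p<\infty$). *)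

theory Defs
  imports "HOL-Analysis.Analysis"
begin

definition simple_graph :: "'v set \<Rightarrow> ('v \<times> 'v) set \<Rightarrow> bool" where
  "simple_graph V E \<longleftrightarrow> finite V \<and> E \<subseteq> V \<times> V \<and> (\<forall>v. (v, v) \<notin> E)"

definition is_walk :: "('v \<times> 'v) set \<Rightarrow> ('v \<times> 'v) list \<Rightarrow> bool" where
  "is_walk E \<gamma> \<longleftrightarrow> \<gamma> \<noteq> [] \<and> set \<gamma> \<subseteq> E \<and>
     (\<forall>i. i + 1 < length \<gamma> \<longrightarrow> snd (\<gamma> ! i) = fst (\<gamma> ! (i + 1)))"

definition rho_length :: "('v \<times> 'v \<Rightarrow> real) \<Rightarrow> ('v \<times> 'v) list \<Rightarrow> real" where
  "rho_length \<rho> \<gamma> = sum_list (map \<rho> \<gamma>)"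

definition admissible :: "('v \<times> 'v) set \<Rightarrow> ('v \<times> 'v) list set \<Rightarrow> ('v \<times> 'v \<Rightarrow> real) set" where
  "admissible E \<Gamma> = {\<rho>. (\<forall>e. e \<notin> E \<longrightarrow> \<rho> e = 0) \<and> (\<forall>e\<in>E. 0 \<le> \<rho> e) \<and>
                        (\<forall>\<gamma>\<in>\<Gamma>. 1 \<le> rho_length \<rho> \<gamma>)}"

definition energy :: "('v \<times> 'v) set \<Rightarrow> real \<Rightarrow> ('v \<times> 'v \<Rightarrow> real) \<Rightarrow> ('v \<times> 'v \<Rightarrow> real) \<Rightarrow> real" where
  "energy E p \<sigma> \<rho> = (\<Sum>e\<in>E. \<sigma> e * \<bar>\<rho> e\<bar> powr p)"

definition Mod :: "('v \<times> 'v) set \<Rightarrow> real \<Rightarrow> ('v \<times> 'v) list set \<Rightarrow> ('v \<times> 'v \<Rightarrow> real) \<Rightarrow> real" where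
  "Mod E p \<Gamma> \<sigma> = Inf (energy E p \<sigma> ` admissible E \<Gamma>)"

definition extremal_density ::
  "('v \<times> 'v) set \<Rightarrow> real \<Rightarrow> ('v \<times> 'v) list set \<Rightarrow> ('v \<times> 'v \<Rightarrow> real) \<Rightarrow> ('v \<times> 'v \<Rightarrow> real)" where
  "extremal_density E p \<Gamma> \<sigma> =
     (THE \<rho>. \<rho> \<in> admissible E \<Gamma> \<and> energy E p \<sigma> \<rho> = Mod E p \<Gamma> \<sigma>)"

end

theory Submission
  imports Defs
begin


lemma powr_mid_strict_aux:
  fixes a b p :: real assumes p: "1<p" and a: "0\<le>a" and ab: "a<b"
  shows "2 * ((a+b)/2) powr p < a powr p + b powr p"
proof -
  define m where "m = (a+b)/2"
  have am: "a<m" "m<b" using ab by (auto simp: m_def)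
  have cont: "continuous_on {x..y} (\<lambda>z::real. z powr p)" if "0 \<le> x" for x y
    using that p by (intro continuous_on_powr') (auto intro!: continuous_intros)
  have dif: "(\<lambda>z::real. z powr p) differentiable (at z)" if "0 < z" for z
    using has_real_derivative_powr[OF that] real_differentiable_def by blast
  obtain l1 z1 where z1: "a<z1" "z1<m" "((\<lambda>z. z powr p) has_real_derivative l1) (at z1)"
    "m powr p - a powr p = (m-a)*l1"
    using MVT[OF am(1) cont[OF a]] dif a by (smt (verit))
  obtain l2 z2 where z2: "m<z2" "z2<b" "((\<lambda>z. z powr p) has_real_derivative l2) (at z2)"
    "b powr p - m powr p = (b-m)*l2"
    using MVT[OF am(2) cont] dif a am by (smt (verit))
  have l1: "l1 = p * z1 powr (p-1)"
    using DERIV_unique[OF z1(3) has_real_derivative_powr] z1 a by auto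
  have l2: "l2 = p * z2 powr (p-1)"
    using DERIV_unique[OF z2(3) has_real_derivative_powr] z2 a am by auto
  have "z1 powr (p-1) < z2 powr (p-1)"
    using powr_less_mono2[of "p-1" z1 z2] p z1 z2 a by auto
  then have "l1 < l2" using l1 l2 p by auto
  moreover have "m - a = b - m" "m - a > 0" using ab by (auto simp: m_def field_simps)
  ultimately have "m powr p - a powr p < b powr p - m powr p"
    using z1(4) z2(4) by (metis mult_strict_left_mono)
  then show ?thesis by (simp add: m_def)
qed

lemma powr_mid_strict:
  fixes a b p :: real assumes "1<p" "0\<le>a" "0\<le>b" "a\<noteq>b"
  shows "2 * ((a+b)/2) powr p < a powr p + b powr p"
proof (cases "a<b")
  case True thus ?thesis using powr_mid_strict_aux assms by auto
next
  case False
  then have "b<a" using assms by auto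
  thus ?thesis using powr_mid_strict_aux[of p b a] assms by (simp add: add.commute)
qed

lemma powr_mid:
  fixes a b p :: real assumes "1<p" "0\<le>a" "0\<le>b"
  shows "2 * ((a+b)/2) powr p \<le> a powr p + b powr p"
  using powr_mid_strict[OF assms] by (cases "a=b") auto

lemma mid_gap:
  fixes p M \<epsilon> :: real assumes p: "1<p" and e: "0<\<epsilon>"
  shows "\<exists>\<kappa>>0. \<forall>a b. 0\<le>a \<longrightarrow> a\<le>M \<longrightarrow> 0\<le>b \<longrightarrow> b\<le>M \<longrightarrow> \<epsilon> \<le> \<bar>a-b\<bar> \<longrightarrow>
          \<kappa> \<le> a powr p + b powr p - 2*((a+b)/2) powr p"
proof -
  define K where "K = ({0..M}\<times>{0..M}) \<inter> {z::real\<times>real. \<epsilon> \<le> \<bar>fst z - snd z\<bar>}"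
  show ?thesis
  proof (cases "K = {}")
    case True
    then show ?thesis by (rule_tac x=1 in exI) (fastforce simp: K_def)
  next
    case False
    have "closed {z::real\<times>real. \<epsilon> \<le> \<bar>fst z - snd z\<bar>}"
      by (intro closed_Collect_le continuous_intros)
    then have cK: "compact K" unfolding K_def
      by (intro compact_Int_closed compact_Times) auto
    have "continuous_on K (\<lambda>z. fst z powr p + snd z powr p - 2*((fst z + snd z)/2) powr p)"
      using p by (intro continuous_intros continuous_on_powr') (auto simp: K_def)
    from continuous_attains_inf[OF cK False this] obtain z0 where
      z0: "z0 \<in> K" "\<forall>y\<in>K. fst z0 powr p + snd z0 powr p - 2*((fst z0 + snd z0)/2) powr p
            \<le> fst y powr p + snd y powr p - 2*((fst y + snd y)/2) powr p" by blast
    have "0 < fst z0 powr p + snd z0 powr p - 2*((fst z0 + snd z0)/2) powr p"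
      using powr_mid_strict[of p "fst z0" "snd z0"] z0(1) p e by (auto simp: K_def)
    moreover have "\<forall>a b. 0\<le>a \<longrightarrow> a\<le>M \<longrightarrow> 0\<le>b \<longrightarrow> b\<le>M \<longrightarrow> \<epsilon> \<le> \<bar>a-b\<bar> \<longrightarrow>
          fst z0 powr p + snd z0 powr p - 2*((fst z0 + snd z0)/2) powr p \<le> a powr p + b powr p - 2*((a+b)/2) powr p"
    proof (intro allI impI)
      fix a b assume "0\<le>a" "a\<le>M" "0\<le>b" "b\<le>M" "\<epsilon> \<le> \<bar>a-b\<bar>"
      then have "(a,b) \<in> K" by (auto simp: K_def)
      from z0(2)[rule_format, OF this] show "fst z0 powr p + snd z0 powr p - 2*((fst z0 + snd z0)/2) powr p \<le> a powr p + b powr p - 2*((a+b)/2) powr p" by simp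
    qed
    ultimately show ?thesis by blast
  qed
qed

lemma pow_bound:
  fixes x p K :: real assumes "0\<le>x" "x powr p \<le> K" "1\<le>p"
  shows "x \<le> max 1 K"
proof (cases "x \<le> 1")
  case False
  then have "x powr 1 \<le> x powr p" using assms by (intro powr_mono) auto
  then show ?thesis using assms False by auto
qed auto



lemma adm_energy: "\<rho> \<in> admissible E \<Gamma> \<Longrightarrow> energy E p \<sigma> \<rho> = (\<Sum>e\<in>E. \<sigma> e * \<rho> e powr p)"
  unfolding energy_def admissible_def by (intro sum.cong) auto

lemma one_len: "set \<gamma> \<subseteq> E \<Longrightarrow> rho_length (\<lambda>e. if e\<in>E then 1 else 0) \<gamma> = real (length \<gamma>)"
  by (induct \<gamma>) (auto simp: rho_length_def)

lemma one_adm: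
  assumes "\<forall>\<gamma>\<in>\<Gamma>. is_walk E \<gamma>"
  shows "(\<lambda>e. if e\<in>E then 1 else 0) \<in> admissible E \<Gamma>"
proof -
  have "1 \<le> rho_length (\<lambda>e. if e\<in>E then 1 else 0) \<gamma>" if "\<gamma>\<in>\<Gamma>" for \<gamma>
  proof -
    have "\<gamma> \<noteq> []" "set \<gamma> \<subseteq> E" using assms that by (auto simp: is_walk_def)
    then show ?thesis using one_len[of \<gamma> E] by (cases \<gamma>) auto
  qed
  then show ?thesis by (auto simp: admissible_def)
qed

lemma mid_len: "rho_length (\<lambda>e. (\<rho> e + r e)/2) \<gamma> = (rho_length \<rho> \<gamma> + rho_length r \<gamma>)/2"
  by (induct \<gamma>) (auto simp: rho_length_def field_simps)

lemma mid_adm: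
  assumes "\<rho> \<in> admissible E \<Gamma>" "r \<in> admissible E \<Gamma>"
  shows "(\<lambda>e. (\<rho> e + r e)/2) \<in> admissible E \<Gamma>"
proof -
  have "1 \<le> rho_length (\<lambda>e. (\<rho> e + r e)/2) \<gamma>" if "\<gamma> \<in> \<Gamma>" for \<gamma>
    using assms that unfolding admissible_def mid_len by force
  then show ?thesis using assms unfolding admissible_def by auto
qed

lemma mid_sum:
  assumes "\<rho> \<in> admissible E \<Gamma>" "r \<in> admissible E \<Gamma>"
  shows "energy E p \<sigma> \<rho> + energy E p \<sigma> r - 2 * energy E p \<sigma> (\<lambda>e. (\<rho> e + r e)/2)
    = (\<Sum>e\<in>E. \<sigma> e * (\<rho> e powr p + r e powr p - 2*((\<rho> e + r e)/2) powr p))"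
  using assms mid_adm[OF assms]
  by (simp add: adm_energy sum.distrib sum_subtractf sum_distrib_left algebra_simps)

lemma energy_nonneg: "\<forall>e\<in>E. 0 \<le> \<sigma> e \<Longrightarrow> 0 \<le> energy E p \<sigma> \<rho>"
  unfolding energy_def by (intro sum_nonneg) auto

lemma Mod_le:
  assumes "\<forall>e\<in>E. 0 \<le> \<sigma> e" "r \<in> admissible E \<Gamma>"
  shows "Mod E p \<Gamma> \<sigma> \<le> energy E p \<sigma> r"
  unfolding Mod_def using assms energy_nonneg[OF assms(1)]
  by (intro cInf_lower) (auto simp: bdd_below_def)

lemma rho_length_cont: "continuous_on UNIV (\<lambda>r::('a\<times>'a) \<Rightarrow> real. rho_length r \<gamma>)"
  by (induct \<gamma>) (auto simp: rho_length_def intro!: continuous_intros)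

lemma adm_closed: "closed (admissible E \<Gamma>)"
proof -
  have "admissible E \<Gamma> = (\<Inter>e\<in>-E. {r. r e = 0}) \<inter> (\<Inter>e\<in>E. {r. 0 \<le> r e}) \<inter>
      (\<Inter>\<gamma>\<in>\<Gamma>. {r. 1 \<le> rho_length r \<gamma>})" by (auto simp: admissible_def)
  moreover have "closed ((\<Inter>e\<in>-E. {r::('a\<times>'a) \<Rightarrow> real. r e = 0}) \<inter> (\<Inter>e\<in>E. {r. 0 \<le> r e}) \<inter>
      (\<Inter>\<gamma>\<in>\<Gamma>. {r. 1 \<le> rho_length r \<gamma>}))"
    by (intro closed_Int closed_INT ballI closed_Collect_eq closed_Collect_le rho_length_cont
        continuous_on_product_coordinates continuous_on_const)
  ultimately show ?thesis by simp
qed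

lemma pos_lower:
  assumes "finite E" "\<forall>e\<in>E. 0 < \<sigma> e"
  shows "\<exists>c>0. \<forall>e\<in>E. c \<le> (\<sigma> e::real)"
proof -
  define c where "c = Min (insert 1 (\<sigma> ` E))"
  have "c > 0" using assms unfolding c_def by (subst Min_gr_iff) auto
  moreover have "\<forall>e\<in>E. c \<le> \<sigma> e" using assms unfolding c_def by auto
  ultimately show ?thesis by blast
qed

lemma exists_min:
  assumes fin: "finite E" and W: "\<forall>\<gamma>\<in>\<Gamma>. is_walk E \<gamma>" and p: "1<p" and pos: "\<forall>e\<in>E. 0<\<sigma> e"
  shows "\<exists>\<rho>\<in>admissible E \<Gamma>. \<forall>r\<in>admissible E \<Gamma>. energy E p \<sigma> \<rho> \<le> energy E p \<sigma> r"
proof -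
  define one where "one = (\<lambda>e. if e\<in>E then (1::real) else 0)"
  have one: "one \<in> admissible E \<Gamma>" using one_adm[OF W] by (simp add: one_def)
  define B where "B = energy E p \<sigma> one"
  obtain c where c: "c>0" "\<forall>e\<in>E. c \<le> \<sigma> e" using pos_lower[OF fin pos] by blast
  define M where "M = max 1 (B/c)"
  have bnd: "r e \<le> M" if r: "r \<in> admissible E \<Gamma>" "energy E p \<sigma> r \<le> B" and e: "e\<in>E" for r e
  proof -
    have nn: "0 \<le> r e" using r e by (auto simp: admissible_def)
    have "\<sigma> e * r e powr p \<le> (\<Sum>e\<in>E. \<sigma> e * r e powr p)"
      using fin e pos by (intro member_le_sum) (auto intro: less_imp_le)
    also have "\<dots> \<le> B" using r adm_energy by metis
    finally have "c * r e powr p \<le> B"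
      using c e mult_right_mono[of c "\<sigma> e" "r e powr p"] by force
    then have "r e powr p \<le> B/c" using c by (simp add: field_simps)
    then show ?thesis using pow_bound[OF nn _] p unfolding M_def by auto
  qed
  define T where "T = (\<lambda>e. if e\<in>E then {0..M} else {0::real})"
  define S where "S = PiE UNIV T"
  have "compactin (product_topology (\<lambda>_. euclidean) UNIV) S"
    unfolding S_def by (subst compactin_PiE) (auto simp: T_def)
  then have cS: "compact S" by (simp add: euclidean_product_topology)
  define K where "K = S \<inter> admissible E \<Gamma>"
  have cK: "compact K" unfolding K_def using cS adm_closed by blast
  have M1: "1 \<le> M" by (simp add: M_def)
  have oneK: "one \<in> K" using one M1 by (auto simp: K_def S_def T_def one_def)
  have "continuous_on K (energy E p \<sigma>)"
  proof -
    have c1: "continuous_on K (\<lambda>r::('a\<times>'a)\<Rightarrow>real. r e)" for e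
      by (rule continuous_on_subset[OF continuous_on_product_coordinates subset_UNIV])
    have c2: "continuous_on K (\<lambda>r::('a\<times>'a)\<Rightarrow>real. \<bar>r e\<bar> powr p)" for e
      using p by (intro continuous_on_powr' continuous_on_rabs c1 continuous_on_const) auto
    show ?thesis unfolding energy_def
      by (intro continuous_on_sum continuous_on_mult continuous_on_const c2)
  qed
  from continuous_attains_inf[OF cK _ this] oneK obtain \<rho> where
    \<rho>: "\<rho> \<in> K" "\<forall>y\<in>K. energy E p \<sigma> \<rho> \<le> energy E p \<sigma> y" by blast
  have "energy E p \<sigma> \<rho> \<le> energy E p \<sigma> r" if r: "r \<in> admissible E \<Gamma>" for r
  proof (cases "energy E p \<sigma> r \<le> B")
    case True
    then have "r \<in> S" using bnd[OF r True] r by (auto simp: S_def T_def admissible_def)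
    then show ?thesis using \<rho> r by (auto simp: K_def)
  next
    case False
    then show ?thesis using \<rho>(2) oneK by (force simp: B_def)
  qed
  then show ?thesis using \<rho> by (auto simp: K_def)
qed



lemma adm_zero: "r\<in>admissible E \<Gamma> \<Longrightarrow> e\<notin>E \<Longrightarrow> r e = 0"
  unfolding admissible_def mem_Collect_eq by blast

lemma adm_nonneg: "r\<in>admissible E \<Gamma> \<Longrightarrow> e\<in>E \<Longrightarrow> 0 \<le> r e"
  unfolding admissible_def mem_Collect_eq by blast

lemma ext_props:
  assumes fin: "finite E" and W: "\<forall>\<gamma>\<in>\<Gamma>. is_walk E \<gamma>" and p: "1<p" and pos: "\<forall>e\<in>E. 0<\<sigma> e"
  shows "extremal_density E p \<Gamma> \<sigma> \<in> admissible E \<Gamma> \<and>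
         energy E p \<sigma> (extremal_density E p \<Gamma> \<sigma>) = Mod E p \<Gamma> \<sigma>"
proof -
  obtain \<rho> where \<rho>: "\<rho> \<in> admissible E \<Gamma>" "\<forall>r\<in>admissible E \<Gamma>. energy E p \<sigma> \<rho> \<le> energy E p \<sigma> r"
    using exists_min[OF fin W p pos] by blast
  have md: "Mod E p \<Gamma> \<sigma> = energy E p \<sigma> \<rho>" unfolding Mod_def
    by (rule cInf_eq_minimum) (use \<rho> in auto)
  have uniq: "r = \<rho>" if r: "r \<in> admissible E \<Gamma>" "energy E p \<sigma> r = Mod E p \<Gamma> \<sigma>" for r
  proof (rule ccontr)
    assume "r \<noteq> \<rho>"
    then obtain e where "r e \<noteq> \<rho> e" by (auto simp: fun_eq_iff)
    then have ne: "\<rho> e \<noteq> r e" by simp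
    have e: "e \<in> E"
    proof (rule ccontr)
      assume "e \<notin> E"
      then have "\<rho> e = 0" "r e = 0" using adm_zero[OF r(1)] adm_zero[OF \<rho>(1)] by auto
      then show False using ne by simp
    qed
    have m: "(\<lambda>e. (\<rho> e + r e)/2) \<in> admissible E \<Gamma>" by (rule mid_adm[OF \<rho>(1) r(1)])
    have nn: "\<forall>e\<in>E. 0 \<le> \<rho> e \<and> 0 \<le> r e" using adm_nonneg[OF r(1)] adm_nonneg[OF \<rho>(1)] by blast
    have "0 < (\<Sum>e\<in>E. \<sigma> e * (\<rho> e powr p + r e powr p - 2*((\<rho> e + r e)/2) powr p))"
    proof (rule sum_pos2[OF fin e])
      show "0 < \<sigma> e * (\<rho> e powr p + r e powr p - 2*((\<rho> e + r e)/2) powr p)"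
      proof -
        have "0 < \<rho> e powr p + r e powr p - 2*((\<rho> e + r e)/2) powr p"
          using powr_mid_strict[OF p _ _ ne] nn e by auto
        then show ?thesis using pos e by (simp add: mult_pos_pos)
      qed
      fix i assume i: "i \<in> E"
      have "0 \<le> \<rho> i powr p + r i powr p - 2*((\<rho> i + r i)/2) powr p"
        using powr_mid[OF p, of "\<rho> i" "r i"] nn i by auto
      moreover have "0 \<le> \<sigma> i" using pos i by (simp add: less_imp_le)
      ultimately show "0 \<le> \<sigma> i * (\<rho> i powr p + r i powr p - 2*((\<rho> i + r i)/2) powr p)"
        by (rule mult_nonneg_nonneg[rotated])
    qed
    then have "0 < energy E p \<sigma> \<rho> + energy E p \<sigma> r - 2 * energy E p \<sigma> (\<lambda>e. (\<rho> e + r e)/2)"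
      using mid_sum[OF \<rho>(1) r(1)] by simp
    moreover have "energy E p \<sigma> \<rho> \<le> energy E p \<sigma> (\<lambda>e. (\<rho> e + r e)/2)" using \<rho>(2) m by blast
    ultimately show False using r(2) md by linarith
  qed
  have "extremal_density E p \<Gamma> \<sigma> = \<rho>" unfolding extremal_density_def
  proof (rule the_equality)
    show "\<rho> \<in> admissible E \<Gamma> \<and> energy E p \<sigma> \<rho> = Mod E p \<Gamma> \<sigma>" using \<rho> md by simp
    fix x assume "x \<in> admissible E \<Gamma> \<and> energy E p \<sigma> x = Mod E p \<Gamma> \<sigma>"
    then show "x = \<rho>" using uniq by blast
  qed
  then show ?thesis using \<rho> md by simp
qed

lemma ext_bound:
  assumes fin: "finite E" and W: "\<forall>\<gamma>\<in>\<Gamma>. is_walk E \<gamma>" and p: "1<p" and pos: "\<forall>e\<in>E. 0<\<sigma> e"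
    and c: "c>0" "\<forall>e\<in>E. c \<le> \<sigma> e"
  shows "0 \<le> extremal_density E p \<Gamma> \<sigma> e \<and> extremal_density E p \<Gamma> \<sigma> e \<le> max 1 ((\<Sum>e\<in>E. \<sigma> e)/c)"
proof -
  define r where "r = extremal_density E p \<Gamma> \<sigma>"
  have r: "r \<in> admissible E \<Gamma>" "energy E p \<sigma> r = Mod E p \<Gamma> \<sigma>"
    using ext_props[OF fin W p pos] by (auto simp: r_def)
  have pos0: "\<forall>e\<in>E. 0 \<le> \<sigma> e" using pos by (simp add: less_imp_le)
  show ?thesis
  proof (cases "e \<in> E")
    case False
    then have "r e = 0" using r adm_zero by metis
    then show ?thesis unfolding r_def by simp
  next
    case e: True
    have nn: "0 \<le> r e" using r e by (auto simp: admissible_def)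
    have "\<sigma> e * r e powr p \<le> (\<Sum>e\<in>E. \<sigma> e * r e powr p)"
    proof (rule member_le_sum[OF e _ fin])
      fix x assume "x \<in> E - {e}"
      then have "0 \<le> \<sigma> x" using pos by (simp add: less_imp_le)
      then show "0 \<le> \<sigma> x * r x powr p" by simp
    qed
    also have "\<dots> = Mod E p \<Gamma> \<sigma>" using r(2) adm_energy[OF r(1)] by simp
    also have "\<dots> \<le> energy E p \<sigma> (\<lambda>e. if e\<in>E then 1 else 0)"
      by (rule Mod_le[OF pos0 one_adm[OF W]])
    also have "\<dots> = (\<Sum>e\<in>E. \<sigma> e)" using one_adm[OF W]
      by (subst adm_energy) (auto intro!: sum.cong)
    finally have 1: "\<sigma> e * r e powr p \<le> (\<Sum>e\<in>E. \<sigma> e)" .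
    have "c * r e powr p \<le> \<sigma> e * r e powr p"
      using c e by (intro mult_right_mono) auto
    with 1 have "c * r e powr p \<le> (\<Sum>e\<in>E. \<sigma> e)" by linarith
    then have "r e powr p \<le> (\<Sum>e\<in>E. \<sigma> e)/c" using c by (simp add: pos_le_divide_eq mult.commute)
    then have "r e \<le> max 1 ((\<Sum>e\<in>E. \<sigma> e)/c)"
      using pow_bound[of "r e" p "(\<Sum>e\<in>E. \<sigma> e)/c"] nn p by linarith
    then have g: "0 \<le> r e \<and> r e \<le> max 1 ((\<Sum>e\<in>E. \<sigma> e)/c)" using nn by simp
    show ?thesis using g unfolding r_def .
  qed
qed

lemma squeeze:
  assumes fin: "finite E" and W: "\<forall>\<gamma>\<in>\<Gamma>. is_walk E \<gamma>" and p: "1<p" and pos: "\<forall>e\<in>E. 0<\<sigma> e"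
    and pos2: "\<forall>e\<in>E. 0<\<tau> e"
  shows "Mod E p \<Gamma> \<tau> - Mod E p \<Gamma> \<sigma> \<le> (\<Sum>e\<in>E. (\<tau> e - \<sigma> e) * extremal_density E p \<Gamma> \<sigma> e powr p)"
    and "(\<Sum>e\<in>E. (\<tau> e - \<sigma> e) * extremal_density E p \<Gamma> \<tau> e powr p) \<le> Mod E p \<Gamma> \<tau> - Mod E p \<Gamma> \<sigma>"
proof -
  define r where "r = extremal_density E p \<Gamma> \<sigma>"
  have r: "r \<in> admissible E \<Gamma>" "energy E p \<sigma> r = Mod E p \<Gamma> \<sigma>"
    using ext_props[OF fin W p pos] by (auto simp: r_def)
  define s where "s = extremal_density E p \<Gamma> \<tau>"
  have s: "s \<in> admissible E \<Gamma>" "energy E p \<tau> s = Mod E p \<Gamma> \<tau>"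
    using ext_props[OF fin W p pos2] by (auto simp: s_def)
  have pos0: "\<forall>e\<in>E. 0 \<le> \<sigma> e" "\<forall>e\<in>E. 0 \<le> \<tau> e" using pos pos2 by (simp_all add: less_imp_le)
  have "Mod E p \<Gamma> \<tau> \<le> energy E p \<tau> r" by (rule Mod_le[OF pos0(2) r(1)])
  then show "Mod E p \<Gamma> \<tau> - Mod E p \<Gamma> \<sigma> \<le> (\<Sum>e\<in>E. (\<tau> e - \<sigma> e) * extremal_density E p \<Gamma> \<sigma> e powr p)"
    using r unfolding r_def[symmetric]
    by (simp add: adm_energy sum_subtractf left_diff_distrib)
  have "Mod E p \<Gamma> \<sigma> \<le> energy E p \<sigma> s" by (rule Mod_le[OF pos0(1) s(1)])
  then show "(\<Sum>e\<in>E. (\<tau> e - \<sigma> e) * extremal_density E p \<Gamma> \<tau> e powr p) \<le> Mod E p \<Gamma> \<tau> - Mod E p \<Gamma> \<sigma>"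
    using s unfolding s_def[symmetric]
    by (simp add: adm_energy sum_subtractf left_diff_distrib)
qed

lemma quot_bound:
  assumes fin: "finite E" and W: "\<forall>\<gamma>\<in>\<Gamma>. is_walk E \<gamma>" and p: "1<p" and pos: "\<forall>e\<in>E. 0<\<sigma> e"
    and pos2: "\<forall>e\<in>E. 0<\<tau> e" and h: "h \<noteq> 0" and t: "\<forall>e\<in>E. \<tau> e = \<sigma> e + h * \<eta> e"
  shows "\<bar>(Mod E p \<Gamma> \<tau> - Mod E p \<Gamma> \<sigma>)/h - (\<Sum>e\<in>E. \<eta> e * extremal_density E p \<Gamma> \<sigma> e powr p)\<bar>
     \<le> (\<Sum>e\<in>E. \<bar>\<eta> e\<bar> * \<bar>extremal_density E p \<Gamma> \<tau> e powr p - extremal_density E p \<Gamma> \<sigma> e powr p\<bar>)"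
proof -
  define L where "L = (\<Sum>e\<in>E. \<eta> e * extremal_density E p \<Gamma> \<sigma> e powr p)"
  define L' where "L' = (\<Sum>e\<in>E. \<eta> e * extremal_density E p \<Gamma> \<tau> e powr p)"
  define D where "D = Mod E p \<Gamma> \<tau> - Mod E p \<Gamma> \<sigma>"
  have s1: "(\<Sum>e\<in>E. (\<tau> e - \<sigma> e) * extremal_density E p \<Gamma> \<sigma> e powr p) = h * L"
    unfolding L_def sum_distrib_left using t by (intro sum.cong) auto
  have s2: "(\<Sum>e\<in>E. (\<tau> e - \<sigma> e) * extremal_density E p \<Gamma> \<tau> e powr p) = h * L'"
    unfolding L'_def sum_distrib_left using t by (intro sum.cong) auto
  have u: "D \<le> h * L" and l: "h * L' \<le> D"
    using squeeze[OF fin W p pos pos2] s1 s2 unfolding D_def by auto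
  have "\<bar>D/h - L\<bar> \<le> \<bar>L' - L\<bar>"
  proof (cases "h > 0")
    case True
    then have "D/h \<le> L" "L' \<le> D/h" using u l by (auto simp: field_simps)
    then show ?thesis by auto
  next
    case False
    then have hn: "h < 0" using h by auto
    then have "L \<le> D/h" "D/h \<le> L'" using u l by (auto simp: field_simps)
    then show ?thesis by auto
  qed
  also have "\<bar>L' - L\<bar> = \<bar>\<Sum>e\<in>E. \<eta> e * (extremal_density E p \<Gamma> \<tau> e powr p - extremal_density E p \<Gamma> \<sigma> e powr p)\<bar>"
    unfolding L_def L'_def by (simp add: sum_subtractf right_diff_distrib)
  also have "\<dots> \<le> (\<Sum>e\<in>E. \<bar>\<eta> e\<bar> * \<bar>extremal_density E p \<Gamma> \<tau> e powr p - extremal_density E p \<Gamma> \<sigma> e powr p\<bar>)"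
    by (rule order_trans[OF sum_abs]) (simp add: abs_mult)
  finally show ?thesis unfolding D_def L_def .
qed



lemma ev_close:
  assumes fin: "finite E" and g: "\<forall>e\<in>E. ((\<lambda>x. g x e) \<longlongrightarrow> (\<sigma> e::real)) F" and d: "0 < d"
  shows "eventually (\<lambda>x. \<forall>e\<in>E. \<bar>g x e - \<sigma> e\<bar> < d) F"
proof (rule eventually_ball_finite[OF fin], intro ballI)
  fix e assume "e \<in> E"
  from tendstoD[OF g[rule_format, OF this] d] show "eventually (\<lambda>x. \<bar>g x e - \<sigma> e\<bar> < d) F"
    by (simp add: dist_real_def)
qed

lemma ev_pos:
  assumes fin: "finite E" and pos: "\<forall>e\<in>E. 0 < \<sigma> e" and g: "\<forall>e\<in>E. ((\<lambda>x. g x e) \<longlongrightarrow> (\<sigma> e::real)) F"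
  shows "eventually (\<lambda>x. \<forall>e\<in>E. 0 < g x e) F"
proof (rule eventually_ball_finite[OF fin], intro ballI)
  fix e assume "e \<in> E"
  from order_tendstoD(1)[OF g[rule_format, OF this]] pos \<open>e\<in>E\<close>
  show "eventually (\<lambda>x. 0 < g x e) F" by blast
qed

lemma ext_cont:
  assumes fin: "finite E" and W: "\<forall>\<gamma>\<in>\<Gamma>. is_walk E \<gamma>" and p: "1<p" and pos: "\<forall>e\<in>E. 0<\<sigma> e"
    and g: "\<forall>e\<in>E. ((\<lambda>x. g x e) \<longlongrightarrow> \<sigma> e) F" and e0: "e0 \<in> E"
  shows "((\<lambda>x. extremal_density E p \<Gamma> (g x) e0) \<longlongrightarrow> extremal_density E p \<Gamma> \<sigma> e0) F"
proof (rule tendstoI)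
  fix \<epsilon> :: real assume \<epsilon>: "0 < \<epsilon>"
  define \<rho> where "\<rho> = extremal_density E p \<Gamma> \<sigma>"
  have \<rho>: "\<rho> \<in> admissible E \<Gamma>" "energy E p \<sigma> \<rho> = Mod E p \<Gamma> \<sigma>"
    using ext_props[OF fin W p pos] by (auto simp: \<rho>_def)
  obtain c0 where c0: "c0 > 0" "\<forall>e\<in>E. c0 \<le> \<sigma> e" using pos_lower[OF fin pos] by blast
  define c where "c = c0/2"
  have c: "c > 0" "\<forall>e\<in>E. 2*c \<le> \<sigma> e" "\<forall>e\<in>E. c \<le> \<sigma> e" using c0 by (auto simp: c_def)
  define S where "S = (\<Sum>e\<in>E. \<sigma> e)"
  have S0: "0 \<le> S" unfolding S_def using pos by (intro sum_nonneg) (simp add: less_imp_le)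
  define M where "M = max 1 ((S + real (card E) * c)/c)"
  have M1: "1 \<le> M" by (simp add: M_def)
  obtain \<kappa> where \<kappa>: "\<kappa> > 0" "\<forall>a b. 0\<le>a \<longrightarrow> a\<le>M \<longrightarrow> 0\<le>b \<longrightarrow> b\<le>M \<longrightarrow> \<epsilon> \<le> \<bar>a-b\<bar> \<longrightarrow>
          \<kappa> \<le> a powr p + b powr p - 2*((a+b)/2) powr p" using mid_gap[OF p \<epsilon>, of M] by blast
  define B where "B = real (card E) * M powr p + 1"
  have B: "B > 0" unfolding B_def by (simp add: add_nonneg_pos)
  define \<delta> where "\<delta> = min c (c*\<kappa>/B)"
  have \<delta>: "\<delta> > 0" "\<delta> \<le> c" "\<delta> * B \<le> c * \<kappa>" using c \<kappa> B
    by (auto simp: \<delta>_def min_def field_simps)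
  have \<rho>M: "0 \<le> \<rho> e \<and> \<rho> e \<le> M" for e
  proof -
    have "0 \<le> \<rho> e \<and> \<rho> e \<le> max 1 (S/c)" using ext_bound[OF fin W p pos c(1) c(3)]
      unfolding \<rho>_def S_def by blast
    moreover have "S/c \<le> (S + real (card E) * c)/c" using c
      by (intro divide_right_mono) auto
    ultimately show ?thesis unfolding M_def by auto
  qed
  show "eventually (\<lambda>x. dist (extremal_density E p \<Gamma> (g x) e0) (extremal_density E p \<Gamma> \<sigma> e0) < \<epsilon>) F"
    using ev_close[OF fin g \<delta>(1)]
  proof eventually_elim
    case (elim x)
    define \<tau> where "\<tau> = g x"
    have H: "\<forall>e\<in>E. \<bar>\<tau> e - \<sigma> e\<bar> < \<delta>" using elim by (simp add: \<tau>_def)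
    have \<tau>c: "\<forall>e\<in>E. c \<le> \<tau> e" using H c \<delta> by force
    have \<tau>pos: "\<forall>e\<in>E. 0 < \<tau> e" using \<tau>c c by force
    define r where "r = extremal_density E p \<Gamma> \<tau>"
    have r: "r \<in> admissible E \<Gamma>" "energy E p \<tau> r = Mod E p \<Gamma> \<tau>"
      using ext_props[OF fin W p \<tau>pos] by (auto simp: r_def)
    have sum\<tau>: "(\<Sum>e\<in>E. \<tau> e) \<le> S + real (card E) * c"
    proof -
      have "(\<Sum>e\<in>E. \<tau> e) \<le> (\<Sum>e\<in>E. \<sigma> e + c)" using H \<delta> by (intro sum_mono) force
      also have "\<dots> = S + real (card E) * c" by (simp add: S_def sum.distrib)
      finally show ?thesis .
    qed
    have rM: "0 \<le> r e \<and> r e \<le> M" for e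
    proof -
      have "0 \<le> r e \<and> r e \<le> max 1 ((\<Sum>e\<in>E. \<tau> e)/c)" using ext_bound[OF fin W p \<tau>pos c(1) \<tau>c]
        unfolding r_def by blast
      moreover have "(\<Sum>e\<in>E. \<tau> e)/c \<le> (S + real (card E) * c)/c" using c sum\<tau>
        by (intro divide_right_mono) auto
      ultimately show ?thesis unfolding M_def by auto
    qed
    have pM: "a powr p \<le> M powr p" if "0 \<le> a" "a \<le> M" for a
      using that p by (intro powr_mono2) auto
    have bound: "(\<Sum>e\<in>E. (\<alpha> e - \<beta> e) * q e powr p) \<le> real (card E) * (\<delta> * M powr p)"
      if ab: "\<forall>e\<in>E. \<bar>\<alpha> e - \<beta> e\<bar> \<le> \<delta>" and q: "\<forall>e. 0 \<le> q e \<and> q e \<le> M" for \<alpha> \<beta> q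
    proof -
      have "(\<Sum>e\<in>E. (\<alpha> e - \<beta> e) * q e powr p) \<le> (\<Sum>e\<in>E. \<delta> * M powr p)"
      proof (rule sum_mono)
        fix e assume e: "e \<in> E"
        have "(\<alpha> e - \<beta> e) * q e powr p \<le> \<bar>\<alpha> e - \<beta> e\<bar> * q e powr p"
          by (intro mult_right_mono) auto
        also have "\<dots> \<le> \<delta> * M powr p"
        proof -
          have "0 \<le> q e" "q e \<le> M" using q by blast+
          then have "q e powr p \<le> M powr p" by (rule pM)
          then show ?thesis using ab e \<delta> by (intro mult_mono) auto
        qed
        finally show "(\<alpha> e - \<beta> e) * q e powr p \<le> \<delta> * M powr p" .
      qed
      then show ?thesis by simp
    qed
    have Hle: "\<forall>e\<in>E. \<bar>\<tau> e - \<sigma> e\<bar> \<le> \<delta>" "\<forall>e\<in>E. \<bar>\<sigma> e - \<tau> e\<bar> \<le> \<delta>" using H by force+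
    have e1: "energy E p \<sigma> r = energy E p \<tau> r + (\<Sum>e\<in>E. (\<sigma> e - \<tau> e) * r e powr p)"
      using r(1) by (simp add: adm_energy sum_subtractf left_diff_distrib)
    have e2: "Mod E p \<Gamma> \<tau> - Mod E p \<Gamma> \<sigma> \<le> (\<Sum>e\<in>E. (\<tau> e - \<sigma> e) * \<rho> e powr p)"
      using squeeze(1)[OF fin W p pos \<tau>pos] unfolding \<rho>_def .
    have e3: "energy E p \<sigma> r \<le> Mod E p \<Gamma> \<sigma> + 2 * (real (card E) * (\<delta> * M powr p))"
      using e1 e2 r(2) bound[OF Hle(1), of \<rho>] bound[OF Hle(2), of r] \<rho>M rM by auto
    define m where "m = (\<lambda>e. (\<rho> e + r e)/2)"
    have m: "m \<in> admissible E \<Gamma>" unfolding m_def by (rule mid_adm[OF \<rho>(1) r(1)])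
    have pos0: "\<forall>e\<in>E. 0 \<le> \<sigma> e" using pos by (simp add: less_imp_le)
    have "Mod E p \<Gamma> \<sigma> \<le> energy E p \<sigma> m" by (rule Mod_le[OF pos0 m])
    then have sm: "(\<Sum>e\<in>E. \<sigma> e * (\<rho> e powr p + r e powr p - 2*((\<rho> e + r e)/2) powr p))
        \<le> 2 * (real (card E) * (\<delta> * M powr p))"
      using mid_sum[OF \<rho>(1) r(1), of p \<sigma>] e3 \<rho>(2) unfolding m_def by linarith
    have nnt: "0 \<le> \<sigma> e * (\<rho> e powr p + r e powr p - 2*((\<rho> e + r e)/2) powr p)" if "e \<in> E" for e
    proof -
      have "0 \<le> \<rho> e powr p + r e powr p - 2*((\<rho> e + r e)/2) powr p"
        using powr_mid[OF p, of "\<rho> e" "r e"] \<rho>M rM by auto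
      moreover have "0 \<le> \<sigma> e" using pos0 that by simp
      ultimately show ?thesis by (rule mult_nonneg_nonneg[rotated])
    qed
    have t0: "\<sigma> e0 * (\<rho> e0 powr p + r e0 powr p - 2*((\<rho> e0 + r e0)/2) powr p)
        \<le> 2 * (real (card E) * (\<delta> * M powr p))"
      using member_le_sum[OF e0 _ fin, of "\<lambda>e. \<sigma> e * (\<rho> e powr p + r e powr p - 2*((\<rho> e + r e)/2) powr p)"]
        nnt sm by force
    show ?case
    proof (rule ccontr)
      assume "\<not> ?case"
      then have "\<epsilon> \<le> \<bar>\<rho> e0 - r e0\<bar>" by (simp add: dist_real_def r_def \<tau>_def \<rho>_def abs_minus_commute)
      then have k: "\<kappa> \<le> \<rho> e0 powr p + r e0 powr p - 2*((\<rho> e0 + r e0)/2) powr p"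
        using \<kappa>(2) \<rho>M rM by blast
      have "2*c*\<kappa> \<le> \<sigma> e0 * (\<rho> e0 powr p + r e0 powr p - 2*((\<rho> e0 + r e0)/2) powr p)"
        using c(2) e0 k c \<kappa> by (intro mult_mono) auto
      also have "\<dots> \<le> 2 * (real (card E) * (\<delta> * M powr p))" by (rule t0)
      also have "\<dots> < 2 * (\<delta> * B)" using \<delta> by (simp add: B_def algebra_simps)
      also have "\<dots> \<le> 2 * (c * \<kappa>)" using \<delta> by simp
      finally show False by simp
    qed
  qed
qed



lemma dir_lim:
  assumes fin: "finite E" and W: "\<forall>\<gamma>\<in>\<Gamma>. is_walk E \<gamma>" and p: "1<p" and pos: "\<forall>e\<in>E. 0<\<sigma> e"
    and g: "\<forall>e\<in>E. ((\<lambda>x. g x e) \<longlongrightarrow> \<sigma> e) F"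
    and ev: "eventually (\<lambda>x. h x \<noteq> 0 \<and> (\<forall>e\<in>E. g x e = \<sigma> e + h x * \<eta> e)) F"
  shows "((\<lambda>x. (Mod E p \<Gamma> (g x) - Mod E p \<Gamma> \<sigma>) / h x) \<longlongrightarrow>
           (\<Sum>e\<in>E. \<eta> e * extremal_density E p \<Gamma> \<sigma> e powr p)) F"
proof -
  let ?L = "(\<Sum>e\<in>E. \<eta> e * extremal_density E p \<Gamma> \<sigma> e powr p)"
  let ?R = "\<lambda>x. (\<Sum>e\<in>E. \<bar>\<eta> e\<bar> * \<bar>extremal_density E p \<Gamma> (g x) e powr p - extremal_density E p \<Gamma> \<sigma> e powr p\<bar>)"
  have evp: "eventually (\<lambda>x. \<forall>e\<in>E. 0 < g x e) F" by (rule ev_pos[OF fin pos g])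
  have pe: "((\<lambda>x. extremal_density E p \<Gamma> (g x) e powr p) \<longlongrightarrow> extremal_density E p \<Gamma> \<sigma> e powr p) F"
    if e: "e \<in> E" for e
  proof (rule tendsto_powr'[OF ext_cont[OF fin W p pos g e] tendsto_const])
    have "eventually (\<lambda>x. 0 \<le> extremal_density E p \<Gamma> (g x) e) F"
      using evp
    proof eventually_elim
      case (elim x)
      show ?case using adm_nonneg[OF conjunct1[OF ext_props[OF fin W p elim]] e] by blast
    qed
    then show "extremal_density E p \<Gamma> \<sigma> e \<noteq> 0 \<or> (0 < p \<and> eventually (\<lambda>x. 0 \<le> extremal_density E p \<Gamma> (g x) e) F)"
      using p by auto
  qed
  have "(?R \<longlongrightarrow> (\<Sum>e\<in>E. \<bar>\<eta> e\<bar> * \<bar>extremal_density E p \<Gamma> \<sigma> e powr p - extremal_density E p \<Gamma> \<sigma> e powr p\<bar>)) F"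
    by (intro tendsto_sum tendsto_mult tendsto_const tendsto_rabs tendsto_diff pe)
  then have R0: "(?R \<longlongrightarrow> 0) F" by simp
  have "eventually (\<lambda>x. norm ((Mod E p \<Gamma> (g x) - Mod E p \<Gamma> \<sigma>) / h x - ?L) \<le> ?R x) F"
    using ev evp
  proof eventually_elim
    case (elim x)
    then show ?case using quot_bound[OF fin W p pos _ _ , of "g x" "h x" \<eta>] by simp
  qed
  from Lim_null_comparison[OF this R0] show ?thesis by (rule LIM_zero_cancel)
qed

theorem mainTheorem14:
  fixes V :: "'v set" and E :: "('v \<times> 'v) set" and \<Gamma> :: "('v \<times> 'v) list set"
    and p :: real and \<sigma> \<eta> :: "'v \<times> 'v \<Rightarrow> real"
  assumes "simple_graph V E"
    and "\<Gamma> \<noteq> {}" and "\<forall>\<gamma>\<in>\<Gamma>. is_walk E \<gamma>"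
    and "1 < p"
    and "\<forall>e\<in>E. 0 < \<sigma> e"
  shows "((\<lambda>h. (Mod E p \<Gamma> (\<lambda>e. \<sigma> e + h * \<eta> e) - Mod E p \<Gamma> \<sigma>) / h)
            \<longlongrightarrow> (\<Sum>e\<in>E. \<eta> e * (extremal_density E p \<Gamma> \<sigma> e) powr p)) (at_right 0)
       \<and> (\<forall>e\<in>E. ((\<lambda>t. Mod E p \<Gamma> (\<sigma>(e := \<sigma> e + t)))
               has_real_derivative (extremal_density E p \<Gamma> \<sigma> e) powr p) (at 0))"
proof
  have fin: "finite E" using assms(1) unfolding simple_graph_def
    by (meson finite_SigmaI finite_subset)
  note W = assms(3) and p = assms(4) and pos = assms(5)
  show "((\<lambda>h. (Mod E p \<Gamma> (\<lambda>e. \<sigma> e + h * \<eta> e) - Mod E p \<Gamma> \<sigma>) / h)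
            \<longlongrightarrow> (\<Sum>e\<in>E. \<eta> e * (extremal_density E p \<Gamma> \<sigma> e) powr p)) (at_right 0)"
  proof (rule dir_lim[OF fin W p pos])
    show "\<forall>e\<in>E. ((\<lambda>x. \<sigma> e + x * \<eta> e) \<longlongrightarrow> \<sigma> e) (at_right 0)"
    proof
      fix e
      have "((\<lambda>x. \<sigma> e + x * \<eta> e) \<longlongrightarrow> \<sigma> e + 0 * \<eta> e) (at_right (0::real))"
        by (intro tendsto_intros)
      then show "((\<lambda>x. \<sigma> e + x * \<eta> e) \<longlongrightarrow> \<sigma> e) (at_right 0)" by simp
    qed
    show "eventually (\<lambda>x. x \<noteq> 0 \<and> (\<forall>e\<in>E. \<sigma> e + x * \<eta> e = \<sigma> e + x * \<eta> e)) (at_right 0)"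
      using eventually_at_right_less[of "0::real"] by eventually_elim auto
  qed
  show "\<forall>e\<in>E. ((\<lambda>t. Mod E p \<Gamma> (\<sigma>(e := \<sigma> e + t)))
               has_real_derivative (extremal_density E p \<Gamma> \<sigma> e) powr p) (at 0)"
  proof
    fix e assume e: "e \<in> E"
    define \<eta>' where "\<eta>' = (\<lambda>e'. if e' = e then 1 else (0::real))"
    have L: "(\<Sum>e'\<in>E. \<eta>' e' * extremal_density E p \<Gamma> \<sigma> e' powr p) = extremal_density E p \<Gamma> \<sigma> e powr p"
    proof -
      have "(\<Sum>e'\<in>E. \<eta>' e' * extremal_density E p \<Gamma> \<sigma> e' powr p)
          = (\<Sum>e'\<in>E. if e' = e then extremal_density E p \<Gamma> \<sigma> e' powr p else 0)"
        by (intro sum.cong) (auto simp: \<eta>'_def)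
      also have "\<dots> = extremal_density E p \<Gamma> \<sigma> e powr p" using fin e by (simp add: sum.delta)
      finally show ?thesis .
    qed
    have "((\<lambda>t. (Mod E p \<Gamma> (\<sigma>(e := \<sigma> e + t)) - Mod E p \<Gamma> \<sigma>) / t) \<longlongrightarrow>
           (\<Sum>e'\<in>E. \<eta>' e' * extremal_density E p \<Gamma> \<sigma> e' powr p)) (at 0)"
    proof (rule dir_lim[OF fin W p pos])
      show "\<forall>e'\<in>E. ((\<lambda>x. (\<sigma>(e := \<sigma> e + x)) e') \<longlongrightarrow> \<sigma> e') (at 0)"
      proof
        fix e'
        show "((\<lambda>x. (\<sigma>(e := \<sigma> e + x)) e') \<longlongrightarrow> \<sigma> e') (at 0)"
        proof (cases "e' = e")
          case True
          have "((\<lambda>x::real. \<sigma> e + x) \<longlongrightarrow> \<sigma> e + 0) (at 0)"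
            by (intro tendsto_add tendsto_const tendsto_ident_at)
          then show ?thesis using True by simp
        next
          case False
          then show ?thesis by simp
        qed
      qed
      show "eventually (\<lambda>x. x \<noteq> 0 \<and> (\<forall>e'\<in>E. (\<sigma>(e := \<sigma> e + x)) e' = \<sigma> e' + x * \<eta>' e')) (at 0)"
        using eventually_neq_at_within[of "0::real" 0 UNIV] by eventually_elim (auto simp: \<eta>'_def)
    qed
    then have "((\<lambda>t. (Mod E p \<Gamma> (\<sigma>(e := \<sigma> e + t)) - Mod E p \<Gamma> (\<sigma>(e := \<sigma> e + 0))) / (t - 0)) \<longlongrightarrow>
           extremal_density E p \<Gamma> \<sigma> e powr p) (at 0)" using L by simp
    then show "((\<lambda>t. Mod E p \<Gamma> (\<sigma>(e := \<sigma> e + t)))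
               has_real_derivative (extremal_density E p \<Gamma> \<sigma> e) powr p) (at 0)"
      by (simp add: has_field_derivative_iff)
  qed
qed

end
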